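(* Let $\tau$ be a strongly $(n,p;a,c)$ regular graph with $0<c<p<n-1$, whose adjacency matrix has eigenvalues $p$, $r$ and $s$, where $r=\frac{a-c+\sqrt{(a-c)^2+4(p-c)}}{2}$ and $s=\frac{a-c-\sqrt{(a-c)^2+4(p-c)}}{2}$. Then \begin{align*} &(rn+p-r)^3+(-n+p-r)^3p+(p-r)^3(n-p-1)\ge 0,\\ &(rn+p-s)^3+(-n+p-s)^3p+(p-s)^3(n-p-1)\ge 0,\\ &(rn+p-r)^2(rn+p-s)+(-n+p-r)^2(-n+p-s)p+(p-r)^2(p-s)(n-p-1)\ge 0,\\ &(rn+p-r)(rn+p-s)^2+(-n+p-r)(-n+p-s)^2p+(p-r)(p-s)^2(n-p-1)\ge 0,\\ &(|s|n+s-p)^2(rn+p-s)+(n+s-p)^2(-n+p-s)p+(s-p)^2(p-s)(n-p-1)\ge 0. \end{align*}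
   Context: A graph is strongly $(n,p;a,c)$ regular if it is a simple graph on $n$ vertices, not complete and not null, every vertex has exactly $p$ neighbours, every pair of adjacent vertices has exactly $a$ common neighbours, and every pair of distinct non-adjacent vertices has exactly $c$ common neighbours. *)

theory Defs
  imports Main Complex_Main
begin

definition strongly_regular ::
  "'v set \<Rightarrow> ('v \<Rightarrow> 'v \<Rightarrow> bool) \<Rightarrow> nat \<Rightarrow> nat \<Rightarrow> nat \<Rightarrow> nat \<Rightarrow> bool" where
  "strongly_regular V E n p a c \<longleftrightarrow>
     finite V \<and> card V = n \<and>
     (\<forall>x\<in>V. \<not> E x x) \<and>
     (\<forall>x\<in>V. \<forall>y\<in>V. E x y \<longrightarrow> E y x) \<and>
     (\<exists>x\<in>V. \<exists>y\<in>V. x \<noteq> y \<and> \<not> E x y) \<and>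
     (\<exists>x\<in>V. \<exists>y\<in>V. E x y) \<and>
     (\<forall>x\<in>V. card {z\<in>V. E x z} = p) \<and>
     (\<forall>x\<in>V. \<forall>y\<in>V. E x y \<longrightarrow> card {z\<in>V. E x z \<and> E y z} = a) \<and>
     (\<forall>x\<in>V. \<forall>y\<in>V. x \<noteq> y \<and> \<not> E x y \<longrightarrow> card {z\<in>V. E x z \<and> E y z} = c)"

end

theory Submission
  imports Defs
begin

lemma schur3:
  fixes M1 M2 M3 :: "'v \<Rightarrow> 'v \<Rightarrow> real"
  assumes fin: "finite V"
    and h1: "\<And>x y. x \<in> V \<Longrightarrow> y \<in> V \<Longrightarrow> M1 x y = (\<Sum>z\<in>V. f1 z x * f1 z y)"
    and h2: "\<And>x y. x \<in> V \<Longrightarrow> y \<in> V \<Longrightarrow> M2 x y = (\<Sum>z\<in>V. f2 z x * f2 z y)"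
    and h3: "\<And>x y. x \<in> V \<Longrightarrow> y \<in> V \<Longrightarrow> M3 x y = (\<Sum>z\<in>V. f3 z x * f3 z y)"
  shows "0 \<le> (\<Sum>x\<in>V. \<Sum>y\<in>V. M1 x y * M2 x y * M3 x y)"
proof -
  define g where "g q x = (case q of (t, w, z) \<Rightarrow> f1 z x * f2 w x * f3 t x)" for q x
  have pt: "M1 x y * M2 x y * M3 x y = (\<Sum>q\<in>V \<times> V \<times> V. g q x * g q y)"
    if "x \<in> V" "y \<in> V" for x y
  proof -
    have "M1 x y * M2 x y * M3 x y
       = (\<Sum>z\<in>V. f1 z x * f1 z y) * (\<Sum>w\<in>V. f2 w x * f2 w y) * (\<Sum>t\<in>V. f3 t x * f3 t y)"
      using that h1 h2 h3 by simp
    also have "\<dots> = (\<Sum>t\<in>V. \<Sum>w\<in>V. \<Sum>z\<in>V. (f1 z x * f1 z y) * (f2 w x * f2 w y) * (f3 t x * f3 t y))"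
      by (simp add: sum_distrib_left sum_distrib_right mult.assoc)
    also have "\<dots> = (\<Sum>t\<in>V. \<Sum>(w,z)\<in>V \<times> V. (f1 z x * f1 z y) * (f2 w x * f2 w y) * (f3 t x * f3 t y))"
      by (simp add: sum.cartesian_product)
    also have "\<dots> = (\<Sum>(t,w,z)\<in>V \<times> V \<times> V. (f1 z x * f1 z y) * (f2 w x * f2 w y) * (f3 t x * f3 t y))"
      by (simp add: sum.cartesian_product)
    also have "\<dots> = (\<Sum>q\<in>V \<times> V \<times> V. g q x * g q y)"
      by (rule sum.cong) (auto simp: g_def)
    finally show ?thesis .
  qed
  have "(\<Sum>x\<in>V. \<Sum>y\<in>V. M1 x y * M2 x y * M3 x y)
      = (\<Sum>x\<in>V. \<Sum>y\<in>V. \<Sum>q\<in>V \<times> V \<times> V. g q x * g q y)"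
    using pt by simp
  also have "\<dots> = (\<Sum>x\<in>V. \<Sum>q\<in>V \<times> V \<times> V. \<Sum>y\<in>V. g q x * g q y)"
    by (rule sum.cong[OF refl], rule sum.swap)
  also have "\<dots> = (\<Sum>q\<in>V \<times> V \<times> V. \<Sum>x\<in>V. \<Sum>y\<in>V. g q x * g q y)"
    by (rule sum.swap)
  also have "\<dots> = (\<Sum>q\<in>V \<times> V \<times> V. (\<Sum>x\<in>V. g q x)^2)"
    by (simp add: power2_eq_square sum_product)
  also have "\<dots> \<ge> 0" by (simp add: sum_nonneg)
  finally show ?thesis by simp
qed

locale srgl =
  fixes V :: "'v set" and E :: "'v \<Rightarrow> 'v \<Rightarrow> bool" and n p a c :: nat
  assumes srg: "strongly_regular V E n p a c"
begin

definition A :: "'v \<Rightarrow> 'v \<Rightarrow> real" where "A x y = (if E x y then 1 else 0)"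
definition D :: "'v \<Rightarrow> 'v \<Rightarrow> real" where "D x y = (if x = y then 1 else 0)"
definition mat :: "real \<Rightarrow> real \<Rightarrow> real \<Rightarrow> 'v \<Rightarrow> 'v \<Rightarrow> real" where
  "mat \<alpha> \<beta> \<gamma> x y = \<alpha> + \<beta> * D x y + \<gamma> * A x y"

lemma fin: "finite V" and cardV: "card V = n" and irr: "\<And>x. x \<in> V \<Longrightarrow> \<not> E x x"
  and sym: "\<And>x y. x \<in> V \<Longrightarrow> y \<in> V \<Longrightarrow> E x y \<Longrightarrow> E y x"
  and deg: "\<And>x. x \<in> V \<Longrightarrow> card {z\<in>V. E x z} = p"
  and cadj: "\<And>x y. x \<in> V \<Longrightarrow> y \<in> V \<Longrightarrow> E x y \<Longrightarrow> card {z\<in>V. E x z \<and> E y z} = a"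
  and cnon: "\<And>x y. x \<in> V \<Longrightarrow> y \<in> V \<Longrightarrow> x \<noteq> y \<Longrightarrow> \<not> E x y \<Longrightarrow> card {z\<in>V. E x z \<and> E y z} = c"
  and nonempty: "V \<noteq> {}"
  using srg unfolding strongly_regular_def by blast+

lemma Asym: "x \<in> V \<Longrightarrow> y \<in> V \<Longrightarrow> A x y = A y x"
  unfolding A_def using sym by auto

lemma Dsym: "D x y = D y x" unfolding D_def by auto

lemma matsym: "x \<in> V \<Longrightarrow> y \<in> V \<Longrightarrow> mat \<alpha> \<beta> \<gamma> x y = mat \<alpha> \<beta> \<gamma> y x"
  unfolding mat_def using Asym[of x y] Dsym[of x y] by simp

lemma sum1: "(\<Sum>z\<in>V. (1::real)) = n" using cardV by simp

lemma sumA: assumes "x \<in> V" shows "(\<Sum>z\<in>V. A x z) = p"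
proof -
  have "(\<Sum>z\<in>V. A x z) = (\<Sum>z\<in>{z\<in>V. E x z}. (1::real))"
    unfolding A_def by (simp only: sum.inter_filter[OF fin])
  also have "\<dots> = p" using deg[OF assms] by simp
  finally show ?thesis .
qed

lemma sumA': assumes "y \<in> V" shows "(\<Sum>z\<in>V. A z y) = p"
proof -
  have "(\<Sum>z\<in>V. A z y) = (\<Sum>z\<in>V. A y z)" by (rule sum.cong) (use assms Asym in auto)
  then show ?thesis using sumA[OF assms] by simp
qed

lemma sumD: "x \<in> V \<Longrightarrow> (\<Sum>z\<in>V. D x z * f z) = f x"
proof -
  assume x: "x \<in> V"
  have "(\<Sum>z\<in>V. D x z * f z) = (\<Sum>z\<in>V. if x = z then f z else 0)"
    by (rule sum.cong) (auto simp: D_def)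
  then show ?thesis using fin x by simp
qed

lemma sumD': "y \<in> V \<Longrightarrow> (\<Sum>z\<in>V. f z * D z y) = f y"
proof -
  assume y: "y \<in> V"
  have "(\<Sum>z\<in>V. f z * D z y) = (\<Sum>z\<in>V. if z = y then f z else 0)"
    by (rule sum.cong) (auto simp: D_def)
  then show ?thesis using fin y by simp
qed

lemma sumAA: assumes x: "x \<in> V" and y: "y \<in> V"
  shows "(\<Sum>z\<in>V. A x z * A z y) = p * D x y + a * A x y + c * (1 - D x y - A x y)"
proof -
  have "(\<Sum>z\<in>V. A x z * A z y) = (\<Sum>z\<in>V. if E x z \<and> E y z then 1 else 0)"
    by (rule sum.cong) (use y sym in \<open>auto simp: A_def\<close>)
  also have "\<dots> = (\<Sum>z\<in>{z\<in>V. E x z \<and> E y z}. (1::real))"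
    by (simp only: sum.inter_filter[OF fin])
  also have "\<dots> = card {z\<in>V. E x z \<and> E y z}" by simp
  also have "\<dots> = p * D x y + a * A x y + c * (1 - D x y - A x y)"
  proof (cases "x = y")
    case True then show ?thesis using deg[OF x] irr[OF x] by (simp add: D_def A_def)
  next
    case False
    show ?thesis
    proof (cases "E x y")
      case True then show ?thesis using cadj[OF x y] False by (simp add: D_def A_def)
    next
      case nE: False then show ?thesis using cnon[OF x y False] False by (simp add: D_def A_def)
    qed
  qed
  finally show ?thesis .
qed

lemma matsq: assumes x: "x \<in> V" and y: "y \<in> V"
  shows "(\<Sum>z\<in>V. mat \<alpha> \<beta> \<gamma> x z * mat \<alpha> \<beta> \<gamma> z y) =
     mat (\<alpha>^2 * n + 2*\<alpha>*\<beta> + 2*\<alpha>*\<gamma>*p + \<gamma>^2 * c) (\<beta>^2 + \<gamma>^2 * (real p - real c)) (2*\<beta>*\<gamma> + \<gamma>^2 * (real a - real c)) x y"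
proof -
  have e: "mat \<alpha> \<beta> \<gamma> x z * mat \<alpha> \<beta> \<gamma> z y =
     \<alpha>^2 * 1 + \<alpha>*\<beta> * D z y + \<alpha>*\<gamma> * A z y + \<alpha>*\<beta> * D x z + \<beta>^2 * (D x z * D z y)
     + \<beta>*\<gamma> * (D x z * A z y) + \<alpha>*\<gamma> * A x z + \<beta>*\<gamma> * (A x z * D z y) + \<gamma>^2 * (A x z * A z y)" for z
    unfolding mat_def by (simp add: algebra_simps power2_eq_square)
  have "(\<Sum>z\<in>V. mat \<alpha> \<beta> \<gamma> x z * mat \<alpha> \<beta> \<gamma> z y) =
     \<alpha>^2 * (\<Sum>z\<in>V. 1) + \<alpha>*\<beta> * (\<Sum>z\<in>V. D z y) + \<alpha>*\<gamma> * (\<Sum>z\<in>V. A z y) + \<alpha>*\<beta> * (\<Sum>z\<in>V. D x z)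
     + \<beta>^2 * (\<Sum>z\<in>V. D x z * D z y)
     + \<beta>*\<gamma> * (\<Sum>z\<in>V. D x z * A z y) + \<alpha>*\<gamma> * (\<Sum>z\<in>V. A x z) + \<beta>*\<gamma> * (\<Sum>z\<in>V. A x z * D z y)
     + \<gamma>^2 * (\<Sum>z\<in>V. A x z * A z y)"
    unfolding e by (simp add: sum.distrib sum_distrib_left)
  also have "(\<Sum>z\<in>V. D z y) = 1" using sumD'[OF y, of "\<lambda>_. 1"] by simp
  also have "(\<Sum>z\<in>V. D x z) = 1" using sumD[OF x, of "\<lambda>_. 1"] by simp
  also have "(\<Sum>z\<in>V. D x z * D z y) = D x y" using sumD[OF x] by simp
  also have "(\<Sum>z\<in>V. D x z * A z y) = A x y" using sumD[OF x] by simp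
  also have "(\<Sum>z\<in>V. A x z * D z y) = A x y" using sumD'[OF y] by simp
  finally have S: "(\<Sum>z\<in>V. mat \<alpha> \<beta> \<gamma> x z * mat \<alpha> \<beta> \<gamma> z y) =
     \<alpha>^2 * (\<Sum>z\<in>V. 1) + \<alpha>*\<beta> * 1 + \<alpha>*\<gamma> * (\<Sum>z\<in>V. A z y) + \<alpha>*\<beta> * 1
     + \<beta>^2 * D x y + \<beta>*\<gamma> * A x y + \<alpha>*\<gamma> * (\<Sum>z\<in>V. A x z) + \<beta>*\<gamma> * A x y
     + \<gamma>^2 * (\<Sum>z\<in>V. A x z * A z y)" .
  show ?thesis
    apply (subst S)
    apply (simp only: sumAA[OF x y] sumA[OF x] sumA'[OF y] sum1)
    apply (simp add: mat_def algebra_simps power2_eq_square)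
    done
qed

lemma rowsum: fixes h :: "real \<Rightarrow> real \<Rightarrow> real" assumes x: "x \<in> V"
  shows "(\<Sum>y\<in>V. h (D x y) (A x y)) = h 1 0 + p * h 0 1 + (real n - p - 1) * h 0 0"
proof -
  have "(\<Sum>y\<in>V. h (D x y) (A x y)) = (\<Sum>y\<in>V. D x y * (h 1 0 - h 0 0) + A x y * (h 0 1 - h 0 0) + h 0 0)"
    by (rule sum.cong) (use x irr in \<open>auto simp: D_def A_def\<close>)
  also have "\<dots> = (\<Sum>y\<in>V. D x y) * (h 1 0 - h 0 0) + (\<Sum>y\<in>V. A x y) * (h 0 1 - h 0 0)
     + (\<Sum>y\<in>V. 1) * h 0 0"
    by (simp add: sum.distrib sum_distrib_right)
  also have "(\<Sum>y\<in>V. D x y) = 1" using sumD[OF x, of "\<lambda>_. 1"] by simp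
  finally show ?thesis using sumA[OF x] sum1 by (simp add: algebra_simps)
qed

lemma count: "real p * p = (real a - real c) * p + (real p - real c) + real c * n"
proof -
  obtain x where x: "x \<in> V" using nonempty by blast
  have "(\<Sum>y\<in>V. \<Sum>z\<in>V. A x z * A z y) = (\<Sum>z\<in>V. A x z * (\<Sum>y\<in>V. A z y))"
    by (simp add: sum_distrib_left, rule sum.swap)
  also have "\<dots> = (\<Sum>z\<in>V. A x z * p)"
    by (rule sum.cong) (auto simp: sumA)
  also have "\<dots> = p * p" using sumA[OF x] by (simp add: sum_distrib_right[symmetric])
  finally have 1: "(\<Sum>y\<in>V. \<Sum>z\<in>V. A x z * A z y) = p * p" .
  have "(\<Sum>y\<in>V. \<Sum>z\<in>V. A x z * A z y) = (\<Sum>y\<in>V. p * D x y + a * A x y + c * (1 - D x y - A x y))"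
    by (rule sum.cong) (auto simp: sumAA x)
  also have "\<dots> = p + a * p + c * (real n - 1 - p)"
    using rowsum[OF x, of "\<lambda>d e. real p * d + real a * e + real c * (1 - d - e)"] by simp
  finally show ?thesis using 1 by (simp add: algebra_simps)
qed


lemma gram:
  assumes lam: "lam > 0"
    and sq: "\<And>x y. x \<in> V \<Longrightarrow> y \<in> V \<Longrightarrow>
       (\<Sum>z\<in>V. mat \<alpha> \<beta> \<gamma> x z * mat \<alpha> \<beta> \<gamma> z y) = lam * mat \<alpha> \<beta> \<gamma> x y"
    and x: "x \<in> V" and y: "y \<in> V"
  shows "mat \<alpha> \<beta> \<gamma> x y = (\<Sum>z\<in>V. (mat \<alpha> \<beta> \<gamma> z x / sqrt lam) * (mat \<alpha> \<beta> \<gamma> z y / sqrt lam))"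
proof -
  have "(\<Sum>z\<in>V. (mat \<alpha> \<beta> \<gamma> z x / sqrt lam) * (mat \<alpha> \<beta> \<gamma> z y / sqrt lam))
      = (\<Sum>z\<in>V. mat \<alpha> \<beta> \<gamma> x z * mat \<alpha> \<beta> \<gamma> z y) / lam"
    unfolding sum_divide_distrib
    by (rule sum.cong) (use lam x matsym in \<open>auto simp: real_sqrt_mult[symmetric]\<close>)
  also have "\<dots> = mat \<alpha> \<beta> \<gamma> x y" using sq[OF x y] lam by simp
  finally show ?thesis by simp
qed

lemma key:
  fixes lam \<alpha>1 \<beta>1 \<gamma>1 \<alpha>2 \<beta>2 \<gamma>2 \<alpha>3 \<beta>3 \<gamma>3 :: real
  assumes lam: "lam > 0" and npos: "n > 0"
    and c1: "\<alpha>1^2 * n + 2*\<alpha>1*\<beta>1 + 2*\<alpha>1*\<gamma>1*p + \<gamma>1^2 * c = lam * \<alpha>1"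
        "\<beta>1^2 + \<gamma>1^2 * (real p - real c) = lam * \<beta>1" "2*\<beta>1*\<gamma>1 + \<gamma>1^2 * (real a - real c) = lam * \<gamma>1"
    and c2: "\<alpha>2^2 * n + 2*\<alpha>2*\<beta>2 + 2*\<alpha>2*\<gamma>2*p + \<gamma>2^2 * c = lam * \<alpha>2"
        "\<beta>2^2 + \<gamma>2^2 * (real p - real c) = lam * \<beta>2" "2*\<beta>2*\<gamma>2 + \<gamma>2^2 * (real a - real c) = lam * \<gamma>2"
    and c3: "\<alpha>3^2 * n + 2*\<alpha>3*\<beta>3 + 2*\<alpha>3*\<gamma>3*p + \<gamma>3^2 * c = lam * \<alpha>3"
        "\<beta>3^2 + \<gamma>3^2 * (real p - real c) = lam * \<beta>3" "2*\<beta>3*\<gamma>3 + \<gamma>3^2 * (real a - real c) = lam * \<gamma>3"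
  shows "0 \<le> (\<alpha>1+\<beta>1)*(\<alpha>2+\<beta>2)*(\<alpha>3+\<beta>3) + real p * ((\<alpha>1+\<gamma>1)*(\<alpha>2+\<gamma>2)*(\<alpha>3+\<gamma>3))
            + (real n - p - 1) * (\<alpha>1*\<alpha>2*\<alpha>3)"
    (is "0 \<le> ?Q")
proof -
  let ?M1 = "mat \<alpha>1 \<beta>1 \<gamma>1" and ?M2 = "mat \<alpha>2 \<beta>2 \<gamma>2" and ?M3 = "mat \<alpha>3 \<beta>3 \<gamma>3"
  have s1: "(\<Sum>z\<in>V. ?M1 x z * ?M1 z y) = lam * ?M1 x y" if "x \<in> V" "y \<in> V" for x y
  proof -
    have "(\<Sum>z\<in>V. ?M1 x z * ?M1 z y) = mat (\<alpha>1^2 * n + 2*\<alpha>1*\<beta>1 + 2*\<alpha>1*\<gamma>1*p + \<gamma>1^2 * c)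
       (\<beta>1^2 + \<gamma>1^2 * (real p - real c)) (2*\<beta>1*\<gamma>1 + \<gamma>1^2 * (real a - real c)) x y"
      by (rule matsq[OF that])
    also have "\<dots> = mat (lam * \<alpha>1) (lam * \<beta>1) (lam * \<gamma>1) x y" by (simp only: c1)
    also have "\<dots> = lam * ?M1 x y" by (simp add: mat_def algebra_simps)
    finally show ?thesis .
  qed
  have s2: "(\<Sum>z\<in>V. ?M2 x z * ?M2 z y) = lam * ?M2 x y" if "x \<in> V" "y \<in> V" for x y
  proof -
    have "(\<Sum>z\<in>V. ?M2 x z * ?M2 z y) = mat (\<alpha>2^2 * n + 2*\<alpha>2*\<beta>2 + 2*\<alpha>2*\<gamma>2*p + \<gamma>2^2 * c)
       (\<beta>2^2 + \<gamma>2^2 * (real p - real c)) (2*\<beta>2*\<gamma>2 + \<gamma>2^2 * (real a - real c)) x y"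
      by (rule matsq[OF that])
    also have "\<dots> = mat (lam * \<alpha>2) (lam * \<beta>2) (lam * \<gamma>2) x y" by (simp only: c2)
    also have "\<dots> = lam * ?M2 x y" by (simp add: mat_def algebra_simps)
    finally show ?thesis .
  qed
  have s3: "(\<Sum>z\<in>V. ?M3 x z * ?M3 z y) = lam * ?M3 x y" if "x \<in> V" "y \<in> V" for x y
  proof -
    have "(\<Sum>z\<in>V. ?M3 x z * ?M3 z y) = mat (\<alpha>3^2 * n + 2*\<alpha>3*\<beta>3 + 2*\<alpha>3*\<gamma>3*p + \<gamma>3^2 * c)
       (\<beta>3^2 + \<gamma>3^2 * (real p - real c)) (2*\<beta>3*\<gamma>3 + \<gamma>3^2 * (real a - real c)) x y"
      by (rule matsq[OF that])
    also have "\<dots> = mat (lam * \<alpha>3) (lam * \<beta>3) (lam * \<gamma>3) x y" by (simp only: c3)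
    also have "\<dots> = lam * ?M3 x y" by (simp add: mat_def algebra_simps)
    finally show ?thesis .
  qed
  have "0 \<le> (\<Sum>x\<in>V. \<Sum>y\<in>V. ?M1 x y * ?M2 x y * ?M3 x y)"
    by (rule schur3[OF fin gram[OF lam s1] gram[OF lam s2] gram[OF lam s3]])
  also have "(\<Sum>x\<in>V. \<Sum>y\<in>V. ?M1 x y * ?M2 x y * ?M3 x y) = (\<Sum>x\<in>V. ?Q)"
  proof (rule sum.cong[OF refl])
    fix x assume x: "x \<in> V"
    show "(\<Sum>y\<in>V. ?M1 x y * ?M2 x y * ?M3 x y) = ?Q"
      using rowsum[OF x, of "\<lambda>d e. (\<alpha>1 + \<beta>1*d + \<gamma>1*e)*(\<alpha>2 + \<beta>2*d + \<gamma>2*e)*(\<alpha>3 + \<beta>3*d + \<gamma>3*e)"]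
      by (simp add: mat_def)
  qed
  also have "\<dots> = n * ?Q" using cardV by simp
  finally show ?thesis using npos by (simp add: zero_le_mult_iff)
qed

end

theorem mainTheorem4:
  fixes V :: "'v set" and E :: "'v \<Rightarrow> 'v \<Rightarrow> bool" and n p a c :: nat
    and r s :: real
  assumes srg: "strongly_regular V E n p a c"
    and hc: "0 < c" and hcp: "c < p" and hpn: "p < n - 1"
    and hr: "r = (real a - real c + sqrt ((real a - real c)^2 + 4 * (real p - real c))) / 2"
    and hs: "s = (real a - real c - sqrt ((real a - real c)^2 + 4 * (real p - real c))) / 2"
  shows "((r * real n + real p - r)^3 + (- real n + real p - r)^3 * p + (real p - r)^3 * (real n - real p - 1) \<ge> 0) \<and>
      ((r * real n + real p - s)^3 + (- real n + real p - s)^3 * p + (real p - s)^3 * (real n - real p - 1) \<ge> 0) \<and>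
      ((r * real n + real p - r)^2 * (r * real n + real p - s) + (- real n + real p - r)^2 * (- real n + real p - s) * real p
           + (real p - r)^2 * (real p - s) * (real n - real p - 1) \<ge> 0) \<and>
      ((r * real n + real p - r) * (r * real n + real p - s)^2 + (- real n + real p - r) * (- real n + real p - s)^2 * real p
           + (real p - r) * (real p - s)^2 * (real n - real p - 1) \<ge> 0) \<and>
      ((\<bar>s\<bar> * real n + s - real p)^2 * (r * real n + real p - s) + (real n + s - real p)^2 * (- real n + real p - s) * real p
           + (s - real p)^2 * (real p - s) * (real n - real p - 1) \<ge> 0)"
proof -
  interpret srgl V E n p a c by unfold_locales (rule srg)
  define d where "d = sqrt ((real a - real c)^2 + 4 * (real p - real c))"
  have pc: "real p - real c > 0" using hcp by simp
  have dsq: "d^2 = (real a - real c)^2 + 4 * (real p - real c)"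
    unfolding d_def using pc by (simp add: add_nonneg_pos)
  have dpos: "d > 0" unfolding d_def using pc by (simp add: add_nonneg_pos)
  have r: "r = (real a - real c + d) / 2" and s: "s = (real a - real c - d) / 2"
    using hr hs d_def by simp_all
  have "\<bar>real a - real c\<bar> \<le> \<bar>d\<bar>" unfolding abs_le_square_iff using dsq pc by simp
  then have sle: "s \<le> 0" using dpos s by simp
  then have abss: "\<bar>s\<bar> = - s" by simp
  have r2: "2 * r = real a - real c + d" and s2: "2 * s = real a - real c - d" using r s by simp_all
  have npos: "n > 0" using hpn by simp
  have cnt: "real p * p = (real a - real c) * p + (real p - real c) + real c * n" by (rule count)
  define lam where "lam = real n * d"
  have lam: "lam > 0" using npos dpos lam_def by simp
  have X: "(real p - r)^2 * n + 2*(real p - r)*(real n * r) + 2*(real p - r)*(- real n)*p + (- real n)^2 * c = lam * (real p - r)"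
      "(real n * r)^2 + (- real n)^2 * (real p - real c) = lam * (real n * r)"
      "2*(real n * r)*(- real n) + (- real n)^2 * (real a - real c) = lam * (- real n)"
    unfolding lam_def using dsq cnt r2 s2 apply -
    apply algebra
    apply algebra
    apply algebra
    done
  have Y: "(real p - s)^2 * n + 2*(real p - s)*(real n * r) + 2*(real p - s)*(- real n)*p + (- real n)^2 * c = lam * (real p - s)"
      "(real n * r)^2 + (- real n)^2 * (real p - real c) = lam * (real n * r)"
      "2*(real n * r)*(- real n) + (- real n)^2 * (real a - real c) = lam * (- real n)"
    unfolding lam_def using dsq cnt r2 s2 apply -
    apply algebra
    apply algebra
    apply algebra
    done
  have Z: "(s - real p)^2 * n + 2*(s - real p)*(- real n * s) + 2*(s - real p)*(real n)*p + (real n)^2 * c = lam * (s - real p)"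
      "(- real n * s)^2 + (real n)^2 * (real p - real c) = lam * (- real n * s)"
      "2*(- real n * s)*(real n) + (real n)^2 * (real a - real c) = lam * (real n)"
    unfolding lam_def using dsq cnt r2 s2 apply -
    apply algebra
    apply algebra
    apply algebra
    done
  note K1 = key[OF lam npos X X X]
  note K2 = key[OF lam npos Y Y Y]
  note K3 = key[OF lam npos X X Y]
  note K4 = key[OF lam npos X Y Y]
  note K5 = key[OF lam npos Z Z Y]
  show ?thesis
  proof (intro conjI)
    show "(r * real n + real p - r)^3 + (- real n + real p - r)^3 * p + (real p - r)^3 * (real n - real p - 1) \<ge> 0"
      using K1 by (simp add: power3_eq_cube algebra_simps)
    show "(r * real n + real p - s)^3 + (- real n + real p - s)^3 * p + (real p - s)^3 * (real n - real p - 1) \<ge> 0"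
      using K2 by (simp add: power3_eq_cube algebra_simps)
    show "(r * real n + real p - r)^2 * (r * real n + real p - s) + (- real n + real p - r)^2 * (- real n + real p - s) * real p
           + (real p - r)^2 * (real p - s) * (real n - real p - 1) \<ge> 0"
      using K3 by (simp add: power2_eq_square algebra_simps)
    show "(r * real n + real p - r) * (r * real n + real p - s)^2 + (- real n + real p - r) * (- real n + real p - s)^2 * real p
           + (real p - r) * (real p - s)^2 * (real n - real p - 1) \<ge> 0"
      using K4 by (simp add: power2_eq_square algebra_simps)
    show "(\<bar>s\<bar> * real n + s - real p)^2 * (r * real n + real p - s) + (real n + s - real p)^2 * (- real n + real p - s) * real p
           + (s - real p)^2 * (real p - s) * (real n - real p - 1) \<ge> 0"
      using K5 unfolding abss by (simp add: power2_eq_square algebra_simps)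
  qed
qed

end
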